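(* Let $r$ be real with $0<|r|<1$, and define for $x\in\mathbb{R}$: $f_r(x):=\sum_{n=1}^\infty r^n\varphi^{(n)}(x)$ and $f_{r,N}(x):=\sum_{n=1}^{N-1}r^n\varphi^{(n)}(x)$. Let $E[f_r]:=\int_0^1 f_r(x)\,dx$. Then for every $N=1,2,\dots$ and every $x\in[0,1]$, $$\frac{f_r(x)-f_{r,N}(x)}{\frac12\sum_{n=N}^\infty r^n}=\frac{2(1-r)}{r}\cdot f_r(2^{N-1}x)=\frac{f_r(2^{N-1}x)}{E[f_r]}.$$
   Context: The tent map on $[0,1]$ is $\varphi(x)=2x$ for $x\in[0,1/2]$ and $\varphi(x)=2(1-x)$ for $x\in[1/2,1]$; it is extended to $\mathbb{R}$ by $\varphi(x):=\varphi(x-[x])$ (period 1), and $\varphi^{(n)}$ denotes the $n$-fold iterate of $\varphi$, so that $\varphi^{(n)}(x)=\varphi(2^{n-1}x)$. *)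

theory Defs
  imports "HOL-Analysis.Analysis"
begin

definition tent :: "real \<Rightarrow> real" where
  "tent x = (if x \<le> 1/2 then 2 * x else 2 * (1 - x))"

definition phi :: "real \<Rightarrow> real" where
  "phi x = tent (x - of_int \<lfloor>x\<rfloor>)"

definition f :: "real \<Rightarrow> real \<Rightarrow> real" where
  "f r x = (\<Sum>n. r ^ Suc n * (phi ^^ Suc n) x)"

definition fN :: "real \<Rightarrow> nat \<Rightarrow> real \<Rightarrow> real" where
  "fN r N x = (\<Sum>n=1..N-1. r ^ n * (phi ^^ n) x)"

definition E :: "real \<Rightarrow> real" where
  "E r = integral {0..1} (f r)"

end

theory Submission
  imports Defs
begin

lemma tent_alt: "tent x = 1 - \<bar>2*x - 1\<bar>" by (simp add: tent_def)

lemma phi_tent: "x \<in> {0..1} \<Longrightarrow> phi x = tent x"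
proof -
  assume x: "x \<in> {0..1}"
  show ?thesis
  proof (cases "x = 1")
    case True thus ?thesis by (simp add: phi_def tent_def)
  next
    case False
    with x have "\<lfloor>x\<rfloor> = 0" by (simp add: floor_eq_iff)
    thus ?thesis by (simp add: phi_def)
  qed
qed

lemma phi_bounds: "0 \<le> phi y \<and> phi y \<le> 1"
proof -
  have "0 \<le> y - of_int \<lfloor>y\<rfloor>" "y - of_int \<lfloor>y\<rfloor> < 1" by linarith+
  thus ?thesis unfolding phi_def tent_def by auto
qed

lemma phi_double: "phi (2*y) = phi (phi y)"
proof -
  define t where "t = y - of_int \<lfloor>y\<rfloor>"
  have t: "0 \<le> t" "t < 1" unfolding t_def by linarith+
  have py: "phi y = tent t" unfolding phi_def t_def ..
  have "2*y = 2*t + 2 * of_int \<lfloor>y\<rfloor>" unfolding t_def by simp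
  hence "\<lfloor>2*y\<rfloor> = \<lfloor>2*t\<rfloor> + 2*\<lfloor>y\<rfloor>" by (metis floor_add_int mult_2 of_int_add)
  hence "2*y - of_int \<lfloor>2*y\<rfloor> = 2*t - of_int \<lfloor>2*t\<rfloor>" unfolding t_def by simp
  hence p2: "phi (2*y) = tent (2*t - of_int \<lfloor>2*t\<rfloor>)" unfolding phi_def by simp
  show ?thesis
  proof (cases "t < 1/2")
    case True
    hence "\<lfloor>2*t\<rfloor> = 0" using t by (simp add: floor_eq_iff)
    moreover have "phi (phi y) = tent (2*t)" using True t py
      by (subst phi_tent) (auto simp: tent_def)
    ultimately show ?thesis using p2 by simp
  next
    case False
    hence "\<lfloor>2*t\<rfloor> = 1" using t by (simp add: floor_eq_iff)
    moreover have "phi (phi y) = tent (2 - 2*t)" using False t py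
      by (subst phi_tent) (auto simp: tent_def)
    ultimately show ?thesis using p2 False t by (simp add: tent_def)
  qed
qed

lemma funpow_double: "n \<ge> 1 \<Longrightarrow> (phi ^^ n) (2*y) = (phi ^^ Suc n) y"
proof -
  assume "n \<ge> 1"
  then obtain m where n: "n = Suc m" by (cases n) auto
  show ?thesis unfolding n
    by (simp only: funpow_Suc_right o_apply phi_double)
qed

lemma funpow_pow2: "n \<ge> 1 \<Longrightarrow> (phi ^^ n) (2^m * x) = (phi ^^ (n + m)) x"
proof (induction m arbitrary: n)
  case 0 thus ?case by simp
next
  case (Suc m)
  have "(phi ^^ n) (2^Suc m * x) = (phi ^^ n) (2 * (2^m * x))" by (simp add: mult.assoc)
  also have "\<dots> = (phi ^^ Suc n) (2^m * x)" using Suc.prems by (rule funpow_double)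
  also have "\<dots> = (phi ^^ (Suc n + m)) x" by (rule Suc.IH) simp
  also have "Suc n + m = n + Suc m" by simp
  finally show ?case .
qed

lemma funpow_bounds: "n \<ge> 1 \<Longrightarrow> 0 \<le> (phi ^^ n) y \<and> (phi ^^ n) y \<le> 1"
  by (cases n) (auto simp: phi_bounds)

lemma summ: assumes "\<bar>r\<bar> < 1" shows "summable (\<lambda>n. r ^ Suc n * (phi ^^ Suc n) y)"
proof (rule summable_comparison_test')
  show "summable (\<lambda>n. \<bar>r\<bar> ^ Suc n)" using assms by (simp add: summable_geometric)
  fix n :: nat
  have "\<bar>(phi ^^ Suc n) y\<bar> \<le> 1" using funpow_bounds[of "Suc n" y] by auto
  hence "\<bar>r\<bar> ^ Suc n * \<bar>(phi ^^ Suc n) y\<bar> \<le> \<bar>r\<bar> ^ Suc n * 1"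
    by (intro mult_left_mono) auto
  thus "norm (r ^ Suc n * (phi ^^ Suc n) y) \<le> \<bar>r\<bar> ^ Suc n" by (simp add: abs_mult power_abs)
qed

lemma f_func: assumes "\<bar>r\<bar> < 1" shows "f r y = r * phi y + r * f r (phi y)"
proof -
  have s: "summable (\<lambda>n. r ^ Suc n * (phi ^^ Suc n) y)" using summ[OF assms] .
  have "f r y = (\<Sum>n. r ^ Suc (Suc n) * (phi ^^ Suc (Suc n)) y) + r * phi y"
    unfolding f_def using suminf_split_head[OF s] by simp
  also have "(\<Sum>n. r ^ Suc (Suc n) * (phi ^^ Suc (Suc n)) y) = (\<Sum>n. r * (r ^ Suc n * (phi ^^ Suc n) (phi y)))"
    by (simp only: funpow_Suc_right o_apply power_Suc mult.assoc)
  also have "\<dots> = r * f r (phi y)" unfolding f_def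
    using suminf_mult[OF summ[OF assms, of "phi y"], of r] by simp
  finally show ?thesis by simp
qed

lemma cont_funpow: "continuous_on {0..1} (phi ^^ n)"
proof (induction n)
  case 0 thus ?case by (simp add: continuous_on_id)
next
  case (Suc n)
  have ct: "continuous_on {0..1} phi"
    apply (rule continuous_on_eq[of _ tent])
    using phi_tent by (auto simp: tent_alt[abs_def] intro!: continuous_intros)
  have "continuous_on {0..1} ((phi ^^ n) \<circ> phi)"
    apply (rule continuous_on_compose[OF ct])
    apply (rule continuous_on_subset[OF Suc.IH])
    using phi_bounds by auto
  thus ?case by (simp only: funpow_Suc_right)
qed

lemma cont_f: assumes "\<bar>r\<bar> < 1" shows "continuous_on {0..1} (f r)"
proof -
  have "uniform_limit {0..1} (\<lambda>n x. \<Sum>i<n. r ^ Suc i * (phi ^^ Suc i) x)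
          (\<lambda>x. \<Sum>i. r ^ Suc i * (phi ^^ Suc i) x) sequentially"
  proof (rule Weierstrass_m_test)
    show "summable (\<lambda>n. \<bar>r\<bar> ^ Suc n)" using assms by (simp add: summable_geometric)
    fix n :: nat and x :: real
    have "\<bar>(phi ^^ Suc n) x\<bar> \<le> 1" using funpow_bounds[of "Suc n" x] by auto
    hence "\<bar>r\<bar> ^ Suc n * \<bar>(phi ^^ Suc n) x\<bar> \<le> \<bar>r\<bar> ^ Suc n * 1"
      by (intro mult_left_mono) auto
    thus "norm (r ^ Suc n * (phi ^^ Suc n) x) \<le> \<bar>r\<bar> ^ Suc n" by (simp add: abs_mult power_abs)
  qed
  hence "continuous_on {0..1} (\<lambda>x. \<Sum>i. r ^ Suc i * (phi ^^ Suc i) x)"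
  proof (rule uniform_limit_theorem[rotated])
    have "\<And>i. continuous_on {0..1} (\<lambda>x. r ^ Suc i * (phi ^^ Suc i) x)"
      by (intro continuous_on_mult continuous_on_const cont_funpow)
    hence "\<And>n. continuous_on {0..1} (\<lambda>x. \<Sum>i<n. r ^ Suc i * (phi ^^ Suc i) x)"
      by (intro continuous_on_sum) auto
    thus "\<forall>\<^sub>F n in sequentially. continuous_on {0..1} (\<lambda>x. \<Sum>i<n. r ^ Suc i * (phi ^^ Suc i) x)"
      by (intro always_eventually) auto
  qed auto
  thus ?thesis unfolding f_def[abs_def] by simp
qed

lemma tent_int:
  fixes g :: "real \<Rightarrow> real"
  assumes "continuous_on {0..1} g"
  shows "((\<lambda>x. g (tent x)) has_integral integral {0..1} g) {0..1}"
proof -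
  define I where "I = integral {0..1} g"
  have gI: "(g has_integral I) (cbox 0 1)" unfolding I_def
    using integrable_continuous_real[OF assms] by (simp add: has_integral_integral)
  have h1: "((\<lambda>x. g (2 * x)) has_integral I/2) {0..1/2}"
    using has_integral_affinity'[OF gI, of 2 0] by simp
  have h2': "((\<lambda>x. g ((-2) * x + 2)) has_integral (1/2) * I) ((\<lambda>x. (-1/2) * x + 1) ` {0..1})"
    using has_integral_affinity[OF gI, of "-2" 2] by simp
  have img: "(\<lambda>x. (-1/2) * x + 1) ` {0..1} = {1/2..(1::real)}"
  proof
    show "(\<lambda>x. (-1/2) * x + 1) ` {0..1} \<subseteq> {1/2..(1::real)}" by auto
    show "{1/2..(1::real)} \<subseteq> (\<lambda>x. (-1/2) * x + 1) ` {0..1}"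
    proof
      fix y :: real assume y: "y \<in> {1/2..1}"
      hence "2 - 2*y \<in> {0..1}" "y = (-1/2) * (2 - 2*y) + 1" by (auto simp: field_simps)
      thus "y \<in> (\<lambda>x. (-1/2) * x + 1) ` {0..1}" by blast
    qed
  qed
  have h2: "((\<lambda>x. g (2 - 2 * x)) has_integral I/2) {1/2..1}"
    using h2' unfolding img by (simp add: algebra_simps)
  have k1: "((\<lambda>x. g (tent x)) has_integral I/2) {0..1/2}"
    by (rule has_integral_eq[OF _ h1]) (auto simp: tent_def)
  have k2: "((\<lambda>x. g (tent x)) has_integral I/2) {1/2..1}"
  proof (rule has_integral_eq[OF _ h2])
    fix x :: real assume x: "x \<in> {1/2..1}"
    show "g (2 - 2 * x) = g (tent x)"
    proof (cases "x = 1/2")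
      case True show ?thesis unfolding True tent_def by simp
    next
      case False thus ?thesis using x by (simp add: tent_def)
    qed
  qed
  have "((\<lambda>x. g (tent x)) has_integral (I/2 + I/2)) {0..1}"
    by (rule has_integral_combine[OF _ _ k1 k2]) auto
  thus ?thesis unfolding I_def by simp
qed

lemma E_val: assumes "\<bar>r\<bar> < 1" shows "E r = r / (2 * (1 - r))"
proof -
  have cf: "continuous_on {0..1} (f r)" using cont_f[OF assms] .
  have a1: "((\<lambda>x. f r (tent x)) has_integral E r) {0..1}"
    unfolding E_def by (rule tent_int[OF cf])
  have a2: "((\<lambda>x. tent x) has_integral 1/2) {0..1}"
    using tent_int[of "\<lambda>x. x"] by (simp add: continuous_on_id)
  have "((\<lambda>x. r * tent x + r * f r (tent x)) has_integral (r * (1/2) + r * E r)) {0..1}"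
    by (intro has_integral_add has_integral_mult_right a1 a2)
  hence "(f r has_integral (r * (1/2) + r * E r)) {0..1}"
  proof (rule has_integral_eq[rotated])
    fix x :: real assume "x \<in> {0..1}"
    thus "r * tent x + r * f r (tent x) = f r x"
      using f_func[OF assms, of x] phi_tent[of x] by simp
  qed
  hence "E r = r * (1/2) + r * E r" unfolding E_def by (rule integral_unique)
  hence "E r * (1 - r) = r / 2" by (simp add: algebra_simps)
  moreover have "1 - r \<noteq> 0" using assms by auto
  ultimately show ?thesis by (simp add: field_simps)
qed

theorem lemma3p1:
  fixes r x :: real and N :: nat
  assumes "0 < \<bar>r\<bar>" "\<bar>r\<bar> < 1" "N \<ge> 1" "x \<in> {0..1}"
  shows "(f r x - fN r N x) / ((1/2) * (\<Sum>k. r ^ (k + N)))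
           = 2 * (1 - r) / r * f r (2 ^ (N - 1) * x)
       \<and> 2 * (1 - r) / r * f r (2 ^ (N - 1) * x) = f r (2 ^ (N - 1) * x) / E r"
proof -
  define M where "M = N - 1"
  have NM: "N = Suc M" unfolding M_def using assms(3) by simp
  have r0: "r \<noteq> 0" and r1: "1 - r \<noteq> 0" using assms by auto
  define F where "F = f r (2 ^ (N - 1) * x)"
  have s: "summable (\<lambda>n. r ^ Suc n * (phi ^^ Suc n) x)" using summ[OF assms(2)] .
  have split: "f r x = (\<Sum>n. r ^ Suc (n + M) * (phi ^^ Suc (n + M)) x)
                + (\<Sum>i<M. r ^ Suc i * (phi ^^ Suc i) x)"
    unfolding f_def by (rule suminf_split_initial_segment[OF s])
  have fN: "fN r N x = (\<Sum>i<M. r ^ Suc i * (phi ^^ Suc i) x)"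
    unfolding fN_def NM by (simp add: sum.atLeast1_atMost_eq lessThan_Suc_atMost)
  have tail: "(\<Sum>n. r ^ Suc (n + M) * (phi ^^ Suc (n + M)) x) = r ^ M * F"
  proof -
    have "\<And>n. r ^ Suc (n + M) * (phi ^^ Suc (n + M)) x
              = r ^ M * (r ^ Suc n * (phi ^^ Suc n) (2 ^ (N - 1) * x))"
      using funpow_pow2[of "Suc n" M x for n] unfolding M_def
      by (simp add: power_add algebra_simps)
    hence "(\<Sum>n. r ^ Suc (n + M) * (phi ^^ Suc (n + M)) x)
           = (\<Sum>n. r ^ M * (r ^ Suc n * (phi ^^ Suc n) (2 ^ (N - 1) * x)))" by (rule suminf_cong)
    also have "\<dots> = r ^ M * F" unfolding F_def f_def
      using suminf_mult[OF summ[OF assms(2)]] by simp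
    finally show ?thesis .
  qed
  have geo: "(\<Sum>k. r ^ (k + N)) = r ^ N / (1 - r)"
  proof -
    have "(\<Sum>k. r ^ k * r ^ N) = (\<Sum>k. r ^ k) * r ^ N"
      by (rule suminf_mult2[symmetric]) (simp add: summable_geometric assms(2))
    thus ?thesis using suminf_geometric[of r] assms(2) by (simp add: power_add)
  qed
  have eq1: "(f r x - fN r N x) / ((1/2) * (\<Sum>k. r ^ (k + N))) = 2 * (1 - r) / r * F"
  proof -
    have num: "f r x - fN r N x = r ^ M * F" using split tail fN by simp
    have den: "(1/2) * (\<Sum>k. r ^ (k + N)) = r ^ M * (r / (2 * (1 - r)))"
      unfolding geo unfolding NM by (simp add: field_simps)
    have rM: "r ^ M \<noteq> 0" using r0 by simp
    have "(f r x - fN r N x) / ((1/2) * (\<Sum>k. r ^ (k + N))) = F / (r / (2 * (1 - r)))"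
      unfolding num den using rM by simp
    also have "\<dots> = 2 * (1 - r) / r * F" by simp
    finally show ?thesis .
  qed
  have eq2: "2 * (1 - r) / r * F = F / E r"
    unfolding E_val[OF assms(2)] by simp
  show ?thesis using eq1 eq2 unfolding F_def by simp
qed

end
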